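(* Let $X$ be a $p$-operator space. Then there exist an index set $I$ and a $p$-complete isometry $\Phi:X'\to\mathcal B(\ell_p(I))$.
   Context: Let $1<p<\infty$. $\mathbb M_{n,m}=\mathcal B(\ell_p^m,\ell_p^n)$ with operator norm, $\mathbb M_n=\mathcal B(\ell_p^n)$. A $p$-operator space is a Banach space $X$ with norms $\|\cdot\|_n$ on $\mathbb M_n(X)$ satisfying $\|u\oplus v\|_{n+m}=\max(\|u\|_n,\|v\|_m)$ and $\|\alpha u\beta\|_n\le\|\alpha\|\|u\|_m\|\beta\|$ for $u\in\mathbb M_m(X)$, $\alpha\in\mathbb M_{n,m}$, $\beta\in\mathbb M_{m,n}$. The dual $X'$ has matrix norms given by $\mathbb M_n(X')=\mathcal{CB}_p(X,\mathbb M_n)$: for $\mu\in\mathbb M_n(X')$, $\|\mu\|_n=\sup\{\|(\mu_{kl}(x_{ij}))\|_{\mathbb M_{nm}}:m,x\in\mathbb M_m(X),\|x\|_m\le1\}$. $\mathcal B(\ell_p(I))$ has matrix norms from $\mathbb M_n(\mathcal B(\ell_p(I)))\subseteq\mathcal B(\ell_p^n\otimes_p\ell_p(I))$. A $p$-complete isometry is a linear map all of whose entrywise amplifications are isometries. *)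

theory Defs
  imports "HOL-Analysis.Analysis"
begin

(* Complex Banach space structure on a real Banach space type 'a, given by a
   complex scalar multiplication smul compatible with the real one and the norm. *)
definition complex_banach :: "(complex \<Rightarrow> 'a::banach \<Rightarrow> 'a) \<Rightarrow> bool" where
  "complex_banach smul \<longleftrightarrow>
     (\<forall>a b x. smul (a + b) x = smul a x + smul b x) \<and>
     (\<forall>a x y. smul a (x + y) = smul a x + smul a y) \<and>
     (\<forall>a b x. smul (a * b) x = smul a (smul b x)) \<and>
     (\<forall>r x. smul (complex_of_real r) x = r *\<^sub>R x) \<and>
     (\<forall>a x. norm (smul a x) = cmod a * norm x)"

definition mats :: "nat \<Rightarrow> nat \<Rightarrow> (nat \<Rightarrow> nat \<Rightarrow> 'z::zero) set" where
  "mats n m = {u. \<forall>i j. \<not> (i < n \<and> j < m) \<longrightarrow> u i j = 0}"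

definition pnorm :: "real \<Rightarrow> 'r set \<Rightarrow> ('r \<Rightarrow> complex) \<Rightarrow> real" where
  "pnorm p A x = (\<Sum>i\<in>A. cmod (x i) powr p) powr (1 / p)"

definition opn :: "real \<Rightarrow> 'r set \<Rightarrow> 'c set \<Rightarrow> ('r \<Rightarrow> 'c \<Rightarrow> complex) \<Rightarrow> real" where
  "opn p A B \<alpha> = Sup {pnorm p A (\<lambda>i. \<Sum>j\<in>B. \<alpha> i j * x j) | x. pnorm p B x \<le> 1}"

definition mmul :: "(complex \<Rightarrow> 'a \<Rightarrow> 'a) \<Rightarrow> nat \<Rightarrow> nat \<Rightarrow> (nat \<Rightarrow> nat \<Rightarrow> complex)
    \<Rightarrow> (nat \<Rightarrow> nat \<Rightarrow> 'a::banach) \<Rightarrow> (nat \<Rightarrow> nat \<Rightarrow> complex) \<Rightarrow> nat \<Rightarrow> nat \<Rightarrow> 'a" where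
  "mmul smul n m \<alpha> u \<beta> i j =
     (if i < n \<and> j < n then (\<Sum>k<m. \<Sum>l<m. smul (\<alpha> i k * \<beta> l j) (u k l)) else 0)"

definition dsum :: "nat \<Rightarrow> nat \<Rightarrow> (nat \<Rightarrow> nat \<Rightarrow> 'a::zero) \<Rightarrow> (nat \<Rightarrow> nat \<Rightarrow> 'a) \<Rightarrow> nat \<Rightarrow> nat \<Rightarrow> 'a" where
  "dsum n m u v i j =
     (if i < n \<and> j < n then u i j
      else if n \<le> i \<and> i < n + m \<and> n \<le> j \<and> j < n + m then v (i - n) (j - n) else 0)"

(* p-operator space structure: N n is the norm on M_n(X) *)
definition p_operator_space :: "real \<Rightarrow> (complex \<Rightarrow> 'a::banach \<Rightarrow> 'a)
    \<Rightarrow> (nat \<Rightarrow> (nat \<Rightarrow> nat \<Rightarrow> 'a) \<Rightarrow> real) \<Rightarrow> bool" where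
  "p_operator_space p smul N \<longleftrightarrow>
     complex_banach smul \<and>
     (\<forall>n. \<forall>u\<in>mats n n. 0 \<le> N n u \<and> (N n u = 0 \<longleftrightarrow> u = (\<lambda>i j. 0))) \<and>
     (\<forall>n. \<forall>u\<in>mats n n. \<forall>v\<in>mats n n. N n (\<lambda>i j. u i j + v i j) \<le> N n u + N n v) \<and>
     (\<forall>n c. \<forall>u\<in>mats n n. N n (\<lambda>i j. smul c (u i j)) = cmod c * N n u) \<and>
     (\<forall>u\<in>mats 1 1. N 1 u = norm (u 0 0)) \<and>
     (\<forall>n m. \<forall>u\<in>mats n n. \<forall>v\<in>mats m m. N (n + m) (dsum n m u v) = max (N n u) (N m v)) \<and>
     (\<forall>n m \<alpha> \<beta>. \<forall>u\<in>mats m m.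
        N n (mmul smul n m \<alpha> u \<beta>) \<le> opn p {..<n} {..<m} \<alpha> * N m u * opn p {..<m} {..<n} \<beta>)"

definition dual_space :: "(complex \<Rightarrow> 'a::banach \<Rightarrow> 'a) \<Rightarrow> ('a \<Rightarrow> complex) set" where
  "dual_space smul = {f. (\<forall>x y. f (x + y) = f x + f y) \<and> (\<forall>c x. f (smul c x) = c * f x) \<and>
                         (\<exists>C. \<forall>x. cmod (f x) \<le> C * norm x)}"

(* matrix norms on M_n(X') = CB_p(X, M_n) *)
definition dual_mnorm :: "real \<Rightarrow> (nat \<Rightarrow> (nat \<Rightarrow> nat \<Rightarrow> 'a::banach) \<Rightarrow> real)
    \<Rightarrow> nat \<Rightarrow> (nat \<Rightarrow> nat \<Rightarrow> ('a \<Rightarrow> complex)) \<Rightarrow> real" where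
  "dual_mnorm p N n \<mu> = Sup {opn p ({..<n} \<times> {..<m}) ({..<n} \<times> {..<m})
        (\<lambda>(k, i) (l, j). \<mu> k l (x i j)) | m x. x \<in> mats m m \<and> N m x \<le> 1}"

definition lp_space :: "real \<Rightarrow> 'i set \<Rightarrow> ('i \<Rightarrow> complex) set" where
  "lp_space p I = {x. (\<forall>i. i \<notin> I \<longrightarrow> x i = 0) \<and> (\<lambda>i. cmod (x i) powr p) summable_on I}"

definition lp_norm :: "real \<Rightarrow> 'i set \<Rightarrow> ('i \<Rightarrow> complex) \<Rightarrow> real" where
  "lp_norm p I x = (\<Sum>\<^sub>\<infinity>i\<in>I. cmod (x i) powr p) powr (1 / p)"

(* T is an element of B(l_p(I)) (only its action on l_p(I) matters) *)
definition bounded_op :: "real \<Rightarrow> 'i set \<Rightarrow> (('i \<Rightarrow> complex) \<Rightarrow> ('i \<Rightarrow> complex)) \<Rightarrow> bool" where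
  "bounded_op p I T \<longleftrightarrow>
     (\<forall>x\<in>lp_space p I. T x \<in> lp_space p I) \<and>
     (\<forall>x\<in>lp_space p I. \<forall>y\<in>lp_space p I. T (\<lambda>i. x i + y i) = (\<lambda>i. T x i + T y i)) \<and>
     (\<forall>c. \<forall>x\<in>lp_space p I. T (\<lambda>i. c * x i) = (\<lambda>i. c * T x i)) \<and>
     (\<exists>C. \<forall>x\<in>lp_space p I. lp_norm p I (T x) \<le> C * lp_norm p I x)"

(* matrix norms on M_n(B(l_p(I))) \<subseteq> B(l_p^n \<otimes>_p l_p(I)) *)
definition op_mnorm :: "real \<Rightarrow> 'i set \<Rightarrow> nat
    \<Rightarrow> (nat \<Rightarrow> nat \<Rightarrow> (('i \<Rightarrow> complex) \<Rightarrow> ('i \<Rightarrow> complex))) \<Rightarrow> real" where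
  "op_mnorm p I n T = Sup {(\<Sum>k<n. lp_norm p I (\<lambda>i. \<Sum>l<n. T k l (x l) i) powr p) powr (1 / p) | x.
        (\<forall>l<n. x l \<in> lp_space p I) \<and> (\<Sum>l<n. lp_norm p I (x l) powr p) powr (1 / p) \<le> 1}"

type_synonym 'a idx = "nat \<times> (nat \<Rightarrow> nat \<Rightarrow> 'a) \<times> nat"

end

theory Submission
  imports Defs
begin


lemma pnorm_nonneg: "0 \<le> pnorm p A x"
  by (simp add: pnorm_def)

lemma pnorm_powr:
  assumes "0 < p" shows "pnorm p A x powr p = (\<Sum>i\<in>A. cmod (x i) powr p)"
proof -
  have "0 \<le> (\<Sum>i\<in>A. cmod (x i) powr p)" by (simp add: sum_nonneg)
  then show ?thesis using assms by (simp add: pnorm_def powr_powr)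
qed

lemma powr_base_le_iff:
  fixes a b p :: real
  assumes "0 \<le> a" "0 \<le> b" "0 < p"
  shows "a powr p \<le> b powr p \<longleftrightarrow> a \<le> b"
proof (rule iffI)
  assume h: "a powr p \<le> b powr p"
  have "(a powr p) powr (1/p) \<le> (b powr p) powr (1/p)"
    by (rule powr_mono2) (use assms h in auto)
  moreover have "(a powr p) powr (1/p) = a" "(b powr p) powr (1/p) = b"
    using assms by (simp_all add: powr_powr)
  ultimately show "a \<le> b" by linarith
next
  assume "a \<le> b"
  then show "a powr p \<le> b powr p" using assms by (intro powr_mono2) auto
qed

lemma pnorm_le_iff:
  assumes "0 < p" "0 \<le> c"
  shows "pnorm p A x \<le> c \<longleftrightarrow> (\<Sum>i\<in>A. cmod (x i) powr p) \<le> c powr p"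
proof -
  have "pnorm p A x \<le> c \<longleftrightarrow> pnorm p A x powr p \<le> c powr p"
    using assms by (simp add: pnorm_nonneg powr_base_le_iff)
  then show ?thesis by (simp only: pnorm_powr[OF assms(1)])
qed

lemma pnorm_le1_iff:
  assumes "0 < p"
  shows "pnorm p A x \<le> 1 \<longleftrightarrow> (\<Sum>i\<in>A. cmod (x i) powr p) \<le> 1"
  using pnorm_le_iff[OF assms, of 1] by simp

lemma pnorm_zero[simp]: "pnorm p A (\<lambda>i. 0) = 0"
  by (simp add: pnorm_def)

lemma pnorm_scale:
  assumes "0 < p"
  shows "pnorm p A (\<lambda>i. c * x i) = cmod c * pnorm p A x"
proof -
  have "(\<Sum>i\<in>A. cmod (c * x i) powr p) = cmod c powr p * (\<Sum>i\<in>A. cmod (x i) powr p)"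
    by (simp add: norm_mult powr_mult sum_distrib_left)
  then have "pnorm p A (\<lambda>i. c * x i) = (cmod c powr p) powr (1/p) * (\<Sum>i\<in>A. cmod (x i) powr p) powr (1/p)"
    by (simp add: pnorm_def powr_mult sum_nonneg)
  also have "\<dots> = cmod c * pnorm p A x" using assms by (simp add: powr_powr pnorm_def)
  finally show ?thesis .
qed

lemma pnorm_eq0:
  assumes "0 < p" "finite A" "pnorm p A x = 0" "i \<in> A" shows "x i = 0"
proof -
  have "(\<Sum>i\<in>A. cmod (x i) powr p) = 0"
    using pnorm_powr[OF assms(1), of A x] assms(3) assms(1) by simp
  then have "cmod (x i) powr p = 0" using assms(2,4) by (simp add: sum_nonneg_eq_0_iff)
  then show ?thesis by simp
qed

lemma Young_Holder:
  fixes p q :: real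
  assumes "1 < p" "q = p / (p - 1)" "finite B"
    and "(\<Sum>i\<in>B. w i powr q) \<le> 1" "(\<Sum>i\<in>B. x i powr p) \<le> 1"
    and "\<And>i. 0 \<le> w i" "\<And>i. 0 \<le> x i"
  shows "(\<Sum>i\<in>B. w i * x i) \<le> 1"
proof -
  have "p - 1 > 0" using assms by simp
  then have q1: "q > 1" unfolding assms(2) by (simp add: less_divide_eq)
  have "1/q = (p-1)/p" using assms(2) by simp
  then have pq: "1/q + 1/p = 1" using assms(1) by (simp add: diff_divide_distrib)
  have "(\<Sum>i\<in>B. w i * x i) \<le> (\<Sum>i\<in>B. w i powr q / q + x i powr p / p)"
    by (intro sum_mono Youngs_inequality) (use q1 pq assms in auto)
  also have "\<dots> = (\<Sum>i\<in>B. w i powr q) / q + (\<Sum>i\<in>B. x i powr p) / p"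
    by (simp add: sum.distrib sum_divide_distrib)
  also have "\<dots> \<le> 1/q + 1/p"
    using assms q1 by (intro add_mono divide_right_mono) auto
  finally show ?thesis using pq by simp
qed



lemma dual_vec:
  fixes v :: "'r \<Rightarrow> complex"
  assumes p: "1 < p" and fin: "finite A"
  shows "\<exists>w. (\<Sum>i\<in>A. cmod (w i) powr (p/(p-1))) \<le> 1 \<and>
             (\<Sum>i\<in>A. w i * v i) = complex_of_real (pnorm p A v)"
proof (cases "pnorm p A v = 0")
  case True
  then show ?thesis by (intro exI[of _ "\<lambda>i. 0"]) simp
next
  case False
  define P where "P = pnorm p A v"
  have P0: "P > 0" using False pnorm_nonneg[of p A v] unfolding P_def by linarith
  define q where "q = p/(p-1)"
  have pq: "(p-1) * q = p" using p unfolding q_def by simp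
  define w where "w i = (if v i = 0 then 0 else
     complex_of_real (cmod (v i) powr (p-1) / P powr (p-1)) * cnj (v i) / complex_of_real (cmod (v i)))" for i
  have wv: "w i * v i = complex_of_real (cmod (v i) powr p / P powr (p-1))" for i
  proof (cases "v i = 0")
    case True then show ?thesis by (simp add: w_def)
  next
    case False
    have "cnj (v i) * v i = complex_of_real ((cmod (v i))\<^sup>2)"
      by (metis complex_norm_square mult.commute)
    then have "cnj (v i) * v i = complex_of_real (cmod (v i) * cmod (v i))"
      by (simp add: power2_eq_square)
    then have E: "cnj (v i) * v i = complex_of_real (cmod (v i)) * complex_of_real (cmod (v i))"
      by simp
    define A where "A = complex_of_real (cmod (v i) powr (p-1) / P powr (p-1))"
    define C where "C = complex_of_real (cmod (v i))"
    have c0: "C \<noteq> 0" using False by (simp add: C_def)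
    have "w i * v i = (A * cnj (v i) / C) * v i"
      by (simp only: w_def if_not_P[OF False] A_def C_def)
    also have "\<dots> = A * (cnj (v i) * v i) / C" by (simp add: divide_inverse ac_simps)
    also have "\<dots> = A * (C * C) / C" by (simp only: E C_def)
    also have "\<dots> = A * C" using c0 by simp
    finally have F: "w i * v i = complex_of_real (cmod (v i) powr (p-1) / P powr (p-1) * cmod (v i))"
      by (simp add: A_def C_def)
    have G: "cmod (v i) powr (p-1) * cmod (v i) = cmod (v i) powr p"
    proof -
      have "cmod (v i) powr (p-1) * cmod (v i) powr 1 = cmod (v i) powr (p-1+1)"
        by (rule powr_add[symmetric])
      then show ?thesis by simp
    qed
    have "cmod (v i) powr (p-1) / P powr (p-1) * cmod (v i) = cmod (v i) powr p / P powr (p-1)"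
      by (metis G times_divide_eq_left)
    then show ?thesis by (simp only: F)
  qed
  have wn: "cmod (w i) = cmod (v i) powr (p-1) / P powr (p-1)" for i
  proof (cases "v i = 0")
    case True then show ?thesis using p by (simp add: w_def)
  next
    case False
    then show ?thesis by (simp add: w_def norm_mult norm_divide)
  qed
  have S: "(\<Sum>i\<in>A. cmod (v i) powr p) = P powr p"
    using pnorm_powr[of p A v] p unfolding P_def by simp
  have "(\<Sum>i\<in>A. w i * v i) = complex_of_real ((\<Sum>i\<in>A. cmod (v i) powr p) / P powr (p-1))"
    by (simp add: wv sum_divide_distrib)
  also have "(\<Sum>i\<in>A. cmod (v i) powr p) / P powr (p-1) = P"
    using P0 by (simp add: S powr_diff[symmetric])
  finally have 1: "(\<Sum>i\<in>A. w i * v i) = complex_of_real (pnorm p A v)" unfolding P_def .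
  have "cmod (w i) powr q = cmod (v i) powr p / P powr p" for i
    using P0 p by (simp add: wn powr_divide powr_powr pq)
  then have "(\<Sum>i\<in>A. cmod (w i) powr q) = (\<Sum>i\<in>A. cmod (v i) powr p) / P powr p"
    by (simp add: sum_divide_distrib)
  also have "\<dots> = 1" using P0 by (simp add: S)
  finally show ?thesis using 1 unfolding q_def by (intro exI[of _ w]) simp
qed



lemma opn_set_ne: "{pnorm p A (\<lambda>i. \<Sum>j\<in>B. \<alpha> i j * x j) | x. pnorm p B x \<le> 1} \<noteq> {}"
proof -
  have "pnorm p B (\<lambda>j. 0) \<le> 1" by simp
  then show ?thesis by blast
qed

lemma opn_le:
  assumes bound: "\<And>x. pnorm p B x \<le> 1 \<Longrightarrow> pnorm p A (\<lambda>i. \<Sum>j\<in>B. \<alpha> i j * x j) \<le> K"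
  shows "opn p A B \<alpha> \<le> K"
proof -
  have h0: "pnorm p B (\<lambda>j. 0) \<le> 1" by simp
  show ?thesis unfolding opn_def
    apply (rule cSup_least)
    using h0 apply blast
    using bound by blast
qed

lemma opn_upper:
  assumes bound: "\<And>x. pnorm p B x \<le> 1 \<Longrightarrow> pnorm p A (\<lambda>i. \<Sum>j\<in>B. \<alpha> i j * x j) \<le> K"
    and "pnorm p B x \<le> 1"
  shows "pnorm p A (\<lambda>i. \<Sum>j\<in>B. \<alpha> i j * x j) \<le> opn p A B \<alpha>"
  unfolding opn_def
proof (rule cSup_upper)
  show "bdd_above {pnorm p A (\<lambda>i. \<Sum>j\<in>B. \<alpha> i j * x j) |x. pnorm p B x \<le> 1}"
    using bound unfolding bdd_above_def by blast
qed (use assms in blast)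

lemma opn_nonneg:
  assumes bound: "\<And>x. pnorm p B x \<le> 1 \<Longrightarrow> pnorm p A (\<lambda>i. \<Sum>j\<in>B. \<alpha> i j * x j) \<le> K"
  shows "0 \<le> opn p A B \<alpha>"
proof -
  have h0: "pnorm p B (\<lambda>j. 0) \<le> 1" by simp
  have "pnorm p A (\<lambda>i. \<Sum>j\<in>B. \<alpha> i j * (\<lambda>j. 0) j) \<le> opn p A B \<alpha>"
    using opn_upper[OF bound h0] .
  then show ?thesis by simp
qed

lemma opn_scale:
  assumes p: "0 < p" and fin: "finite B"
    and bound: "\<And>x. pnorm p B x \<le> 1 \<Longrightarrow> pnorm p A (\<lambda>i. \<Sum>j\<in>B. \<alpha> i j * x j) \<le> K"
  shows "pnorm p A (\<lambda>i. \<Sum>j\<in>B. \<alpha> i j * x j) \<le> opn p A B \<alpha> * pnorm p B x"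
proof (cases "pnorm p B x = 0")
  case True
  then have "\<And>j. j \<in> B \<Longrightarrow> x j = 0" using pnorm_eq0[OF p fin] by blast
  then have "(\<lambda>i. \<Sum>j\<in>B. \<alpha> i j * x j) = (\<lambda>i. 0)" by simp
  then show ?thesis using True by simp
next
  case False
  define c where "c = pnorm p B x"
  have c0: "c > 0" using False pnorm_nonneg[of p B x] unfolding c_def by linarith
  define x' where "x' j = complex_of_real (1/c) * x j" for j
  have "pnorm p B x' = cmod (complex_of_real (1/c)) * c"
    unfolding x'_def c_def by (rule pnorm_scale[OF p])
  also have n1: "cmod (complex_of_real (1/c)) = 1/c" using c0 by (simp only: norm_of_real) simp
  finally have "pnorm p B x' = 1/c * c" .
  then have "pnorm p B x' \<le> 1" using c0 by simp
  then have le: "pnorm p A (\<lambda>i. \<Sum>j\<in>B. \<alpha> i j * x' j) \<le> opn p A B \<alpha>"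
    using opn_upper[OF bound] by blast
  have eq: "(\<lambda>i. \<Sum>j\<in>B. \<alpha> i j * x' j) = (\<lambda>i. complex_of_real (1/c) * (\<Sum>j\<in>B. \<alpha> i j * x j))"
    unfolding x'_def by (simp add: sum_distrib_left ac_simps)
  have "pnorm p A (\<lambda>i. \<Sum>j\<in>B. \<alpha> i j * x' j) = cmod (complex_of_real (1/c)) * pnorm p A (\<lambda>i. \<Sum>j\<in>B. \<alpha> i j * x j)"
    unfolding eq by (rule pnorm_scale[OF p])
  then have "pnorm p A (\<lambda>i. \<Sum>j\<in>B. \<alpha> i j * x' j) = 1/c * pnorm p A (\<lambda>i. \<Sum>j\<in>B. \<alpha> i j * x j)"
    by (simp only: n1)
  then have e2: "pnorm p A (\<lambda>i. \<Sum>j\<in>B. \<alpha> i j * x j) = c * pnorm p A (\<lambda>i. \<Sum>j\<in>B. \<alpha> i j * x' j)"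
    using c0 by simp
  have "c * pnorm p A (\<lambda>i. \<Sum>j\<in>B. \<alpha> i j * x' j) \<le> c * opn p A B \<alpha>"
    using mult_left_mono[OF le] c0 by simp
  then show ?thesis using e2 unfolding c_def by (simp add: mult.commute)
qed



lemma pos_N1: "p_operator_space p smul N \<Longrightarrow> u \<in> mats 1 1 \<Longrightarrow> N 1 u = norm (u 0 0)"
  unfolding p_operator_space_def by blast

lemma pos_nonneg: "p_operator_space p smul N \<Longrightarrow> u \<in> mats n n \<Longrightarrow> 0 \<le> N n u"
  unfolding p_operator_space_def by blast

lemma pos_mmul: "p_operator_space p smul N \<Longrightarrow> u \<in> mats m m \<Longrightarrow>
   N n (mmul smul n m \<alpha> u \<beta>) \<le> opn p {..<n} {..<m} \<alpha> * N m u * opn p {..<m} {..<n} \<beta>"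
  unfolding p_operator_space_def by blast

lemma pos_zero: "p_operator_space p smul N \<Longrightarrow> N n (\<lambda>i j. 0) = 0"
proof -
  assume "p_operator_space p smul N"
  moreover have "(\<lambda>i j. 0) \<in> mats n n" by (simp add: mats_def)
  ultimately show ?thesis unfolding p_operator_space_def by blast
qed

lemma dual_add: "\<mu> \<in> dual_space smul \<Longrightarrow> \<mu> (x + y) = \<mu> x + \<mu> y"
  unfolding dual_space_def by blast

lemma dual_smul: "\<mu> \<in> dual_space smul \<Longrightarrow> \<mu> (smul c x) = c * \<mu> x"
  unfolding dual_space_def by blast

lemma dual_zero: "\<mu> \<in> dual_space smul \<Longrightarrow> \<mu> 0 = 0"
  using dual_add[of \<mu> smul 0 0] by simp

lemma dual_sum: "\<mu> \<in> dual_space smul \<Longrightarrow> \<mu> (sum f S) = (\<Sum>s\<in>S. \<mu> (f s))"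
proof (induction S rule: infinite_finite_induct)
  case (infinite A) then show ?case by (simp add: dual_zero)
next
  case empty then show ?case by (simp add: dual_zero)
next
  case (insert x F) then show ?case by (simp add: dual_add)
qed

lemma dual_bound: "\<mu> \<in> dual_space smul \<Longrightarrow> \<exists>C. 0 \<le> C \<and> (\<forall>x. cmod (\<mu> x) \<le> C * norm x)"
proof -
  assume "\<mu> \<in> dual_space smul"
  then obtain C where C: "\<forall>x. cmod (\<mu> x) \<le> C * norm x" unfolding dual_space_def by blast
  have "\<forall>x. cmod (\<mu> x) \<le> max C 0 * norm x"
  proof
    fix x :: 'a
    have "C * norm x \<le> max C 0 * norm x" by (intro mult_right_mono) auto
    then show "cmod (\<mu> x) \<le> max C 0 * norm x" using C by (meson order_trans)
  qed
  then show ?thesis by (intro exI[of _ "max C 0"]) auto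
qed

lemma pnorm_one: "0 < p \<Longrightarrow> pnorm p {..<Suc 0} f = cmod (f 0)"
  by (simp add: pnorm_def powr_powr lessThan_Suc)

lemma row_le:
  fixes f :: "nat \<times> nat \<Rightarrow> real"
  assumes "k < n" "\<And>r. 0 \<le> f r"
  shows "(\<Sum>b<m. f (k, b)) \<le> (\<Sum>r\<in>{..<n}\<times>{..<m}. f r)"
proof -
  have "(\<Sum>r\<in>{..<n}\<times>{..<m}. f r) = (\<Sum>k'<n. \<Sum>b<m. f (k', b))"
    by (simp add: sum.cartesian_product)
  also have "(\<Sum>b<m. f (k, b)) \<le> \<dots>"
    using assms by (intro member_le_sum[where f="\<lambda>k'. \<Sum>b<m. f (k', b)"]) (auto intro: sum_nonneg)
  finally show ?thesis by simp
qed



lemma pnorm_one': "0 < p \<Longrightarrow> pnorm p {..<1} (f :: nat \<Rightarrow> complex) = cmod (f 0)"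
  by (simp add: pnorm_def powr_powr lessThan_Suc)

lemma E_bound:
  fixes smul :: "complex \<Rightarrow> 'a::banach \<Rightarrow> 'a"
  assumes p: "1 < p" and X: "p_operator_space p smul N"
    and y: "y \<in> mats m m" "N m y \<le> 1"
    and w: "(\<Sum>b<m. cmod (a b) powr (p/(p-1))) \<le> 1"
    and z: "(\<Sum>b<m. cmod (zz b) powr p) \<le> 1"
  shows "norm (\<Sum>i<m. \<Sum>j<m. smul (a i * zz j) (y i j)) \<le> 1"
proof -
  have p0: "0 < p" using p by simp
  define \<alpha> :: "nat \<Rightarrow> nat \<Rightarrow> complex" where "\<alpha> = (\<lambda>_ b. a b)"
  define \<beta> :: "nat \<Rightarrow> nat \<Rightarrow> complex" where "\<beta> = (\<lambda>a' _. zz a')"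
  have eq: "mmul smul 1 m \<alpha> y \<beta> 0 0 = (\<Sum>i<m. \<Sum>j<m. smul (a i * zz j) (y i j))"
    by (simp add: mmul_def \<alpha>_def \<beta>_def)
  have mem: "mmul smul 1 m \<alpha> y \<beta> \<in> mats 1 1" by (simp add: mats_def mmul_def)
  have n1: "norm (\<Sum>i<m. \<Sum>j<m. smul (a i * zz j) (y i j)) = N 1 (mmul smul 1 m \<alpha> y \<beta>)"
    using pos_N1[OF X mem] eq by simp
  have le: "N 1 (mmul smul 1 m \<alpha> y \<beta>) \<le> opn p {..<1} {..<m} \<alpha> * N m y * opn p {..<m} {..<1} \<beta>"
    by (rule pos_mmul[OF X y(1)])
  have ba: "pnorm p {..<1} (\<lambda>i. \<Sum>j\<in>{..<m}. \<alpha> i j * x j) \<le> 1" if hx: "pnorm p {..<m} x \<le> 1" for x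
  proof -
    have "pnorm p {..<1} (\<lambda>i. \<Sum>j\<in>{..<m}. \<alpha> i j * x j) = cmod (\<Sum>j<m. a j * x j)"
      using p0 by (simp only: pnorm_one') (simp add: \<alpha>_def)
    also have "\<dots> \<le> (\<Sum>j<m. cmod (a j) * cmod (x j))"
      by (rule order_trans[OF norm_sum]) (simp add: norm_mult)
    also have "\<dots> \<le> 1"
    proof (rule Young_Holder[OF p refl])
      show "(\<Sum>i<m. cmod (x i) powr p) \<le> 1" using hx pnorm_le1_iff[OF p0] by blast
    qed (use w in auto)
    finally show ?thesis .
  qed
  have bb: "pnorm p {..<m} (\<lambda>i. \<Sum>j\<in>{..<1}. \<beta> i j * x j) \<le> 1" if hx: "pnorm p {..<1} x \<le> 1" for x
  proof -
    have "pnorm p {..<m} (\<lambda>i. \<Sum>j\<in>{..<1}. \<beta> i j * x j) = pnorm p {..<m} (\<lambda>i. x 0 * zz i)"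
      by (simp add: \<beta>_def mult.commute)
    also have "\<dots> = cmod (x 0) * pnorm p {..<m} zz" by (rule pnorm_scale[OF p0])
    also have "\<dots> \<le> 1 * 1"
    proof (rule mult_mono)
      show "cmod (x 0) \<le> 1" using hx pnorm_one'[OF p0, of x] by simp
      show "pnorm p {..<m} zz \<le> 1" using z pnorm_le1_iff[OF p0] by blast
    qed (auto simp: pnorm_nonneg)
    finally show ?thesis by simp
  qed
  have oa: "opn p {..<1} {..<m} \<alpha> \<le> 1" "0 \<le> opn p {..<1} {..<m} \<alpha>"
    using opn_le[OF ba] opn_nonneg[OF ba] by auto
  have ob: "opn p {..<m} {..<1} \<beta> \<le> 1" "0 \<le> opn p {..<m} {..<1} \<beta>"
    using opn_le[OF bb] opn_nonneg[OF bb] by auto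
  have ny: "0 \<le> N m y" by (rule pos_nonneg[OF X y(1)])
  have "opn p {..<1} {..<m} \<alpha> * N m y * opn p {..<m} {..<1} \<beta> \<le> 1"
    using oa ob ny y(2) by (intro mult_le_one) (auto intro: mult_le_one)
  then show ?thesis using n1 le by simp
qed



lemma sum_prod_split: "(\<Sum>r\<in>A\<times>B. f r) = (\<Sum>a\<in>A. \<Sum>b\<in>B. f (a,b))"
  by (simp add: sum.cartesian_product)

lemma cb_bound:
  fixes smul :: "complex \<Rightarrow> 'a::banach \<Rightarrow> 'a" and \<mu> :: "nat \<Rightarrow> nat \<Rightarrow> 'a \<Rightarrow> complex"
  assumes p: "1 < p" and X: "p_operator_space p smul N"
    and mu: "\<And>k l. k<n \<Longrightarrow> l<n \<Longrightarrow> \<mu> k l \<in> dual_space smul"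
    and c: "\<And>k l x. k<n \<Longrightarrow> l<n \<Longrightarrow> cmod (\<mu> k l x) \<le> c k l * norm x"
    and c0: "\<And>k l. k<n \<Longrightarrow> l<n \<Longrightarrow> 0 \<le> c k l"
    and y: "y \<in> mats m m" "N m y \<le> 1"
    and z: "pnorm p ({..<n}\<times>{..<m}) z \<le> 1"
  shows "pnorm p ({..<n}\<times>{..<m}) (\<lambda>r. \<Sum>s\<in>{..<n}\<times>{..<m}. (\<lambda>(k,i) (l,j). \<mu> k l (y i j)) r s * z s)
           \<le> (\<Sum>k<n. \<Sum>l<n. c k l)"
proof -
  have p0: "0 < p" using p by simp
  define A where "A = {..<n}\<times>{..<m}"
  have finA: "finite A" by (simp add: A_def)
  define v where "v = (\<lambda>r. \<Sum>s\<in>A. (\<lambda>(k,i) (l,j). \<mu> k l (y i j)) r s * z s)"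
  obtain w where w1: "(\<Sum>r\<in>A. cmod (w r) powr (p/(p-1))) \<le> 1"
    and w2: "(\<Sum>r\<in>A. w r * v r) = complex_of_real (pnorm p A v)"
    using dual_vec[OF p finA, of v] by blast
  define E where "E k l = (\<Sum>i<m. \<Sum>j<m. smul (w (k,i) * z (l,j)) (y i j))" for k l
  have rhs: "(\<Sum>k<n. \<Sum>l<n. \<mu> k l (E k l)) =
      (\<Sum>k<n. \<Sum>l<n. \<Sum>i<m. \<Sum>j<m. w (k,i) * z (l,j) * \<mu> k l (y i j))"
  proof (intro sum.cong refl)
    fix k l assume "k \<in> {..<n}" "l \<in> {..<n}"
    then have kl: "k < n" "l < n" by auto
    show "\<mu> k l (E k l) = (\<Sum>i<m. \<Sum>j<m. w (k,i) * z (l,j) * \<mu> k l (y i j))"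
      by (simp add: E_def dual_sum[OF mu[OF kl]] dual_smul[OF mu[OF kl]])
  qed
  have lhs: "(\<Sum>r\<in>A. w r * v r) =
      (\<Sum>k<n. \<Sum>i<m. \<Sum>l<n. \<Sum>j<m. w (k,i) * z (l,j) * \<mu> k l (y i j))"
    by (simp add: A_def v_def sum_prod_split sum_distrib_left ac_simps)
  have swap: "(\<Sum>k<n. \<Sum>i<m. \<Sum>l<n. \<Sum>j<m. w (k,i) * z (l,j) * \<mu> k l (y i j)) =
      (\<Sum>k<n. \<Sum>l<n. \<Sum>i<m. \<Sum>j<m. w (k,i) * z (l,j) * \<mu> k l (y i j))"
    by (rule sum.cong[OF refl], rule sum.swap)
  have Ebound: "norm (E k l) \<le> 1" if kl: "k < n" "l < n" for k l
    unfolding E_def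
  proof (rule E_bound[OF p X y])
    show "(\<Sum>b<m. cmod (w (k, b)) powr (p / (p - 1))) \<le> 1"
      using row_le[OF kl(1), of "\<lambda>r. cmod (w r) powr (p/(p-1))" m] w1 unfolding A_def by simp
    have "(\<Sum>r\<in>A. cmod (z r) powr p) \<le> 1" using z pnorm_le1_iff[OF p0] unfolding A_def by blast
    then show "(\<Sum>b<m. cmod (z (l, b)) powr p) \<le> 1"
      using row_le[OF kl(2), of "\<lambda>r. cmod (z r) powr p" m] unfolding A_def by simp
  qed
  have "pnorm p A v = cmod (\<Sum>r\<in>A. w r * v r)" using w2 pnorm_nonneg[of p A v] by simp
  also have "\<dots> = cmod (\<Sum>k<n. \<Sum>l<n. \<mu> k l (E k l))" using lhs swap rhs by simp
  also have "\<dots> \<le> (\<Sum>k<n. \<Sum>l<n. cmod (\<mu> k l (E k l)))"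
    by (rule order_trans[OF norm_sum]) (intro sum_mono norm_sum)
  also have "\<dots> \<le> (\<Sum>k<n. \<Sum>l<n. c k l)"
  proof (intro sum_mono)
    fix k l assume "k \<in> {..<n}" "l \<in> {..<n}"
    then have kl: "k < n" "l < n" by auto
    have "cmod (\<mu> k l (E k l)) \<le> c k l * norm (E k l)" by (rule c[OF kl])
    also have "\<dots> \<le> c k l * 1" by (rule mult_left_mono[OF Ebound[OF kl] c0[OF kl]])
    finally show "cmod (\<mu> k l (E k l)) \<le> c k l" by simp
  qed
  finally show ?thesis unfolding A_def v_def .
qed



lemma block_sum:
  fixes g h :: "nat \<times> 'b \<times> nat \<Rightarrow> real"
  assumes Idef: "I = {(m,y,i). (m,y) \<in> Bs \<and> i < m}"
  assumes g0: "\<And>t. t \<in> I \<Longrightarrow> 0 \<le> g t" and h0: "\<And>t. t\<in>I \<Longrightarrow> 0 \<le> h t"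
    and hs: "h summable_on I"
    and blk: "\<And>m y. (m,y) \<in> Bs \<Longrightarrow> (\<Sum>i<m. g (m,y,i)) \<le> (\<Sum>i<m. h (m,y,i))"
  shows "g summable_on I \<and> infsum g I \<le> infsum h I"
proof -
  have key: "sum g F \<le> infsum h I" if F: "finite F" "F \<subseteq> I" for F
  proof -
    define G where "G = (\<lambda>(m,y,i). (m,y)) ` F"
    define \<phi> :: "(nat \<times> 'b) \<times> nat \<Rightarrow> nat \<times> 'b \<times> nat" where "\<phi> = (\<lambda>((m,y),i). (m,y,i))"
    define F' where "F' = \<phi> ` (SIGMA b:G. {..<fst b})"
    have finG: "finite G" using F by (simp add: G_def)
    have finS: "finite (SIGMA b:G. {..<fst b})" using finG by auto
    then have finF': "finite F'" by (simp add: F'_def)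
    have inj: "inj_on \<phi> (SIGMA b:G. {..<fst b})" unfolding \<phi>_def inj_on_def by auto
    have GB: "G \<subseteq> Bs" using F unfolding G_def Idef by auto
    have FF': "F \<subseteq> F'"
    proof
      fix t assume t: "t \<in> F"
      obtain m y i where t': "t = (m,y,i)" by (cases t) auto
      have "i < m" using t t' F(2) Idef by auto
      moreover have "(m,y) \<in> G" using t t' unfolding G_def by force
      ultimately have "((m,y),i) \<in> (SIGMA b:G. {..<fst b})" by auto
      then show "t \<in> F'" unfolding F'_def \<phi>_def t' by force
    qed
    have F'I: "F' \<subseteq> I" using GB unfolding F'_def \<phi>_def Idef by auto
    have reidx: "sum f F' = (\<Sum>b\<in>G. \<Sum>i<fst b. f (fst b, snd b, i))" for f :: "nat \<times> 'b \<times> nat \<Rightarrow> real"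
    proof -
      have "sum f F' = sum (f \<circ> \<phi>) (SIGMA b:G. {..<fst b})"
        unfolding F'_def by (rule sum.reindex[OF inj])
      also have "f \<circ> \<phi> = (\<lambda>(b,i). f (fst b, snd b, i))" by (auto simp: \<phi>_def fun_eq_iff)
      also have "sum (\<lambda>(b,i). f (fst b, snd b, i)) (SIGMA b:G. {..<fst b}) = (\<Sum>b\<in>G. \<Sum>i<fst b. f (fst b, snd b, i))"
        using finG by (subst sum.Sigma) auto
      finally show ?thesis .
    qed
    have "sum g F \<le> sum g F'"
      using finF' FF' F'I g0 by (intro sum_mono2) auto
    also have "sum g F' = (\<Sum>b\<in>G. \<Sum>i<fst b. g (fst b, snd b, i))" by (rule reidx)
    also have "\<dots> \<le> (\<Sum>b\<in>G. \<Sum>i<fst b. h (fst b, snd b, i))"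
    proof (rule sum_mono)
      fix b assume "b \<in> G"
      then have "(fst b, snd b) \<in> Bs" using GB by auto
      then show "(\<Sum>i<fst b. g (fst b, snd b, i)) \<le> (\<Sum>i<fst b. h (fst b, snd b, i))" by (rule blk)
    qed
    also have "\<dots> = sum h F'" by (rule reidx[symmetric])
    also have "\<dots> \<le> infsum h I"
      using hs finF' F'I h0 by (intro finite_sum_le_infsum) auto
    finally show ?thesis .
  qed
  have gs: "g summable_on I"
  proof (rule nonneg_bdd_above_summable_on)
    show "bdd_above (sum g ` {F. F \<subseteq> I \<and> finite F})"
      using key unfolding bdd_above_def by blast
  qed (use g0 in auto)
  moreover have "infsum g I \<le> infsum h I"
    using gs key by (intro infsum_le_finite_sums) auto
  ultimately show ?thesis by blast
qed



lemma summable_fin_sum: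
  fixes f :: "'k \<Rightarrow> 't \<Rightarrow> real"
  assumes "finite K" "\<And>k. k \<in> K \<Longrightarrow> f k summable_on A"
  shows "(\<lambda>t. \<Sum>k\<in>K. f k t) summable_on A \<and> infsum (\<lambda>t. \<Sum>k\<in>K. f k t) A = (\<Sum>k\<in>K. infsum (f k) A)"
  using assms
proof (induction K rule: finite_induct)
  case empty then show ?case by simp
next
  case (insert k F)
  then have s1: "f k summable_on A" and ih: "(\<lambda>t. \<Sum>k\<in>F. f k t) summable_on A"
     "infsum (\<lambda>t. \<Sum>k\<in>F. f k t) A = (\<Sum>k\<in>F. infsum (f k) A)" by auto
  show ?case using insert(1,2) s1 ih
    by (simp add: summable_on_add infsum_add)
qed

lemma finite_support_infsum:
  fixes f :: "'t \<Rightarrow> real"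
  assumes "finite B" "B \<subseteq> A" "\<And>t. t \<in> A - B \<Longrightarrow> f t = 0"
  shows "f summable_on A \<and> infsum f A = sum f B"
proof -
  have "(f has_sum sum f B) A" using assms by (intro has_sum_finite_neutralI) auto
  then show ?thesis using has_sum_iff by blast
qed

lemma lp_norm_powr:
  assumes "0 < p" shows "lp_norm p I x powr p = infsum (\<lambda>i. cmod (x i) powr p) I"
proof -
  have "0 \<le> infsum (\<lambda>i. cmod (x i) powr p) I" by (rule infsum_nonneg) simp
  then show ?thesis using assms by (simp add: lp_norm_def powr_powr)
qed

lemma powr_le1_iff:
  fixes a p :: real assumes "0 \<le> a" "0 < p"
  shows "a powr (1/p) \<le> 1 \<longleftrightarrow> a \<le> 1"
  using powr_base_le_iff[of a 1 "1/p"] assms by simp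

lemma block_ineq:
  fixes smul :: "complex \<Rightarrow> 'a::banach \<Rightarrow> 'a" and \<mu> :: "nat \<Rightarrow> nat \<Rightarrow> 'a \<Rightarrow> complex"
  assumes p: "1 < p" and X: "p_operator_space p smul N"
    and mu: "\<And>k l. k<n \<Longrightarrow> l<n \<Longrightarrow> \<mu> k l \<in> dual_space smul"
    and c: "\<And>k l x. k<n \<Longrightarrow> l<n \<Longrightarrow> cmod (\<mu> k l x) \<le> c k l * norm x"
    and c0: "\<And>k l. k<n \<Longrightarrow> l<n \<Longrightarrow> 0 \<le> c k l"
    and y: "y \<in> mats m m" "N m y \<le> 1"
  shows "opn p ({..<n}\<times>{..<m}) ({..<n}\<times>{..<m}) (\<lambda>(k,i) (l,j). \<mu> k l (y i j)) \<le> (\<Sum>k<n. \<Sum>l<n. c k l)"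
    and "0 \<le> opn p ({..<n}\<times>{..<m}) ({..<n}\<times>{..<m}) (\<lambda>(k,i) (l,j). \<mu> k l (y i j))"
    and "(\<Sum>k<n. \<Sum>i<m. cmod (\<Sum>l<n. \<Sum>j<m. \<mu> k l (y i j) * z l j) powr p)
          \<le> opn p ({..<n}\<times>{..<m}) ({..<n}\<times>{..<m}) (\<lambda>(k,i) (l,j). \<mu> k l (y i j)) powr p
             * (\<Sum>l<n. \<Sum>j<m. cmod (z l j) powr p)"
proof -
  have p0: "0 < p" using p by simp
  define A where "A = {..<n}\<times>{..<m}"
  define M where "M = (\<lambda>(k,i) (l,j). \<mu> k l (y i j))"
  have bound: "\<And>Z. pnorm p A Z \<le> 1 \<Longrightarrow> pnorm p A (\<lambda>r. \<Sum>s\<in>A. M r s * Z s) \<le> (\<Sum>k<n. \<Sum>l<n. c k l)"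
    unfolding A_def M_def by (rule cb_bound[OF p X mu c c0 y]) auto
  show "opn p ({..<n}\<times>{..<m}) ({..<n}\<times>{..<m}) (\<lambda>(k,i) (l,j). \<mu> k l (y i j)) \<le> (\<Sum>k<n. \<Sum>l<n. c k l)"
    using opn_le[OF bound] unfolding A_def M_def .
  have on: "0 \<le> opn p A A M" using opn_nonneg[OF bound] .
  then show "0 \<le> opn p ({..<n}\<times>{..<m}) ({..<n}\<times>{..<m}) (\<lambda>(k,i) (l,j). \<mu> k l (y i j))"
    unfolding A_def M_def .
  define Z where "Z = (\<lambda>(l,j). z l j)"
  have finA: "finite A" by (simp add: A_def)
  have le: "pnorm p A (\<lambda>r. \<Sum>s\<in>A. M r s * Z s) \<le> opn p A A M * pnorm p A Z"
    by (rule opn_scale[OF p0 finA bound])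
  have "pnorm p A (\<lambda>r. \<Sum>s\<in>A. M r s * Z s) powr p \<le> (opn p A A M * pnorm p A Z) powr p"
    by (rule powr_mono2[OF _ _ le]) (use p0 pnorm_nonneg in auto)
  also have "\<dots> = opn p A A M powr p * pnorm p A Z powr p"
    using on pnorm_nonneg by (simp add: powr_mult)
  finally have "(\<Sum>r\<in>A. cmod (\<Sum>s\<in>A. M r s * Z s) powr p) \<le> opn p A A M powr p * (\<Sum>r\<in>A. cmod (Z r) powr p)"
    by (simp add: pnorm_powr[OF p0])
  then show "(\<Sum>k<n. \<Sum>i<m. cmod (\<Sum>l<n. \<Sum>j<m. \<mu> k l (y i j) * z l j) powr p)
          \<le> opn p ({..<n}\<times>{..<m}) ({..<n}\<times>{..<m}) (\<lambda>(k,i) (l,j). \<mu> k l (y i j)) powr p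
             * (\<Sum>l<n. \<Sum>j<m. cmod (z l j) powr p)"
    unfolding A_def M_def Z_def by (simp add: sum_prod_split)
qed



definition Bset :: "(nat \<Rightarrow> (nat \<Rightarrow> nat \<Rightarrow> 'a::banach) \<Rightarrow> real) \<Rightarrow> (nat \<times> (nat \<Rightarrow> nat \<Rightarrow> 'a)) set" where
  "Bset N = {(m,y). y \<in> mats m m \<and> N m y \<le> 1}"

definition Iset :: "(nat \<Rightarrow> (nat \<Rightarrow> nat \<Rightarrow> 'a::banach) \<Rightarrow> real) \<Rightarrow> 'a idx set" where
  "Iset N = {(m,y,i). (m,y) \<in> Bset N \<and> i < m}"

definition Phi :: "(nat \<Rightarrow> (nat \<Rightarrow> nat \<Rightarrow> 'a::banach) \<Rightarrow> real) \<Rightarrow> ('a \<Rightarrow> complex)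
     \<Rightarrow> ('a idx \<Rightarrow> complex) \<Rightarrow> 'a idx \<Rightarrow> complex" where
  "Phi N \<mu> x = (\<lambda>(m,y,i). if (m,y,i) \<in> Iset N then \<Sum>j<m. \<mu> (y i j) * x (m,y,j) else 0)"

lemma Phi_in: "(m,y) \<in> Bset N \<Longrightarrow> i < m \<Longrightarrow> Phi N \<mu> x (m,y,i) = (\<Sum>j<m. \<mu> (y i j) * x (m,y,j))"
  by (simp add: Phi_def Iset_def)

lemma Phi_out: "t \<notin> Iset N \<Longrightarrow> Phi N \<mu> x t = 0"
  by (cases t) (auto simp: Phi_def)

lemma Phi_lin: "Phi N (\<lambda>y. a * \<mu> y + b * \<nu> y) x = (\<lambda>i. a * Phi N \<mu> x i + b * Phi N \<nu> x i)"
  by (auto simp: fun_eq_iff Phi_def sum_distrib_left sum.distrib ring_distribs ac_simps)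

lemma Phi_add: "Phi N \<mu> (\<lambda>i. x i + y i) = (\<lambda>i. Phi N \<mu> x i + Phi N \<mu> y i)"
  by (auto simp: fun_eq_iff Phi_def sum.distrib ring_distribs)

lemma Phi_scale: "Phi N \<mu> (\<lambda>i. c * x i) = (\<lambda>i. c * Phi N \<mu> x i)"
  by (auto simp: fun_eq_iff Phi_def sum_distrib_left ac_simps)

lemma Phi_bounded:
  fixes smul :: "complex \<Rightarrow> 'a::banach \<Rightarrow> 'a"
  assumes p: "1 < p" and X: "p_operator_space p smul N" and mu: "\<mu> \<in> dual_space smul"
  shows "bounded_op p (Iset N) (Phi N \<mu>)"
proof -
  have p0: "0 < p" using p by simp
  obtain C where C0: "0 \<le> C" and C: "\<And>x. cmod (\<mu> x) \<le> C * norm x"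
    using dual_bound[OF mu] by blast
  have blk: "(\<Sum>i<m. cmod (\<Sum>j<m. \<mu> (y i j) * z j) powr p) \<le> C powr p * (\<Sum>j<m. cmod (z j) powr p)"
    if my: "(m,y) \<in> Bset N" for m y and z :: "nat \<Rightarrow> complex"
  proof -
    have y: "y \<in> mats m m" "N m y \<le> 1" using my by (auto simp: Bset_def)
    note bi = block_ineq[OF p X, of 1 "\<lambda>k l. \<mu>" "\<lambda>k l. C", OF _ _ _ y]
    have o1: "opn p ({..<Suc 0}\<times>{..<m}) ({..<Suc 0}\<times>{..<m}) (\<lambda>(k,i) (l,j). \<mu> (y i j)) \<le> C"
      using bi(1) mu C C0 by simp
    have o0: "0 \<le> opn p ({..<Suc 0}\<times>{..<m}) ({..<Suc 0}\<times>{..<m}) (\<lambda>(k,i) (l,j). \<mu> (y i j))"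
      using bi(2) mu C C0 by simp
    have "(\<Sum>i<m. cmod (\<Sum>j<m. \<mu> (y i j) * z j) powr p) \<le>
        opn p ({..<Suc 0}\<times>{..<m}) ({..<Suc 0}\<times>{..<m}) (\<lambda>(k,i) (l,j). \<mu> (y i j)) powr p * (\<Sum>j<m. cmod (z j) powr p)"
      using bi(3)[of "\<lambda>l j. z j"] mu C C0 by simp
    also have "\<dots> \<le> C powr p * (\<Sum>j<m. cmod (z j) powr p)"
      by (intro mult_right_mono powr_mono2 sum_nonneg) (use o0 o1 p0 in auto)
    finally show ?thesis .
  qed
  have main: "Phi N \<mu> x \<in> lp_space p (Iset N) \<and> lp_norm p (Iset N) (Phi N \<mu> x) \<le> C * lp_norm p (Iset N) x"
    if x: "x \<in> lp_space p (Iset N)" for x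
  proof -
    have xs: "(\<lambda>t. cmod (x t) powr p) summable_on Iset N" using x by (simp add: lp_space_def)
    have bs: "(\<lambda>t. cmod (Phi N \<mu> x t) powr p) summable_on Iset N \<and>
        infsum (\<lambda>t. cmod (Phi N \<mu> x t) powr p) (Iset N) \<le> infsum (\<lambda>t. C powr p * cmod (x t) powr p) (Iset N)"
    proof (rule block_sum[where Bs = "Bset N"])
      show "Iset N = {(m, y, i). (m, y) \<in> Bset N \<and> i < m}" by (simp add: Iset_def)
      show "(\<lambda>t. C powr p * cmod (x t) powr p) summable_on Iset N"
        using xs by (rule summable_on_cmult_right)
      fix m y assume my: "(m, y) \<in> Bset N"
      have "(\<Sum>i<m. cmod (Phi N \<mu> x (m, y, i)) powr p) = (\<Sum>i<m. cmod (\<Sum>j<m. \<mu> (y i j) * x (m,y,j)) powr p)"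
        using my by (intro sum.cong refl) (simp add: Phi_in)
      also have "\<dots> \<le> C powr p * (\<Sum>j<m. cmod (x (m,y,j)) powr p)" by (rule blk[OF my])
      also have "\<dots> = (\<Sum>i<m. C powr p * cmod (x (m, y, i)) powr p)" by (simp add: sum_distrib_left)
      finally show "(\<Sum>i<m. cmod (Phi N \<mu> x (m, y, i)) powr p) \<le> (\<Sum>i<m. C powr p * cmod (x (m, y, i)) powr p)" .
    qed auto
    have inlp: "Phi N \<mu> x \<in> lp_space p (Iset N)"
      using bs Phi_out[of _ N \<mu> x] by (auto simp: lp_space_def)
    have "lp_norm p (Iset N) (Phi N \<mu> x) = infsum (\<lambda>t. cmod (Phi N \<mu> x t) powr p) (Iset N) powr (1/p)"
      by (simp add: lp_norm_def)
    also have "\<dots> \<le> infsum (\<lambda>t. C powr p * cmod (x t) powr p) (Iset N) powr (1/p)"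
      using bs p0 by (intro powr_mono2) (auto intro: infsum_nonneg)
    also have "infsum (\<lambda>t. C powr p * cmod (x t) powr p) (Iset N) = C powr p * infsum (\<lambda>t. cmod (x t) powr p) (Iset N)"
      using xs by (rule infsum_cmult_right)
    also have "(C powr p * infsum (\<lambda>t. cmod (x t) powr p) (Iset N)) powr (1/p) = C * lp_norm p (Iset N) x"
    proof -
      have "0 \<le> infsum (\<lambda>t. cmod (x t) powr p) (Iset N)" by (rule infsum_nonneg) simp
      then show ?thesis using C0 p0 by (simp add: powr_mult powr_powr lp_norm_def)
    qed
    finally show ?thesis using inlp by simp
  qed
  show ?thesis unfolding bounded_op_def
    using main by (auto simp: Phi_add Phi_scale)
qed



lemma Phi_norm:
  fixes smul :: "complex \<Rightarrow> 'a::banach \<Rightarrow> 'a" and \<mu> :: "nat \<Rightarrow> nat \<Rightarrow> 'a \<Rightarrow> complex"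
  assumes p: "1 < p" and X: "p_operator_space p smul N"
    and mu: "\<forall>k<n. \<forall>l<n. \<mu> k l \<in> dual_space smul"
  shows "op_mnorm p (Iset N) n (\<lambda>k l. Phi N (\<mu> k l)) = dual_mnorm p N n \<mu>"
proof -
  have p0: "0 < p" using p by simp
  have mu': "\<And>k l. k<n \<Longrightarrow> l<n \<Longrightarrow> \<mu> k l \<in> dual_space smul" using mu by blast
  define c where "c k l = (SOME C. 0 \<le> C \<and> (\<forall>x. cmod (\<mu> k l x) \<le> C * norm x))" for k l
  have cprop: "0 \<le> c k l \<and> (\<forall>x. cmod (\<mu> k l x) \<le> c k l * norm x)" if "k<n" "l<n" for k l
    unfolding c_def by (rule someI_ex[OF dual_bound[OF mu'[OF that]]])
  have c1: "\<And>k l x. k<n \<Longrightarrow> l<n \<Longrightarrow> cmod (\<mu> k l x) \<le> c k l * norm x" using cprop by blast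
  have c0: "\<And>k l. k<n \<Longrightarrow> l<n \<Longrightarrow> 0 \<le> c k l" using cprop by blast
  define K where "K = (\<Sum>k<n. \<Sum>l<n. c k l)"
  define Mo where "Mo m y = opn p ({..<n}\<times>{..<m}) ({..<n}\<times>{..<m}) (\<lambda>(k,i) (l,j). \<mu> k l (y i j))"
    for m and y :: "nat \<Rightarrow> nat \<Rightarrow> 'a"
  have bi3: "(\<Sum>k<n. \<Sum>i<m. cmod (\<Sum>l<n. \<Sum>j<m. \<mu> k l (y i j) * z l j) powr p)
          \<le> Mo m y powr p * (\<Sum>l<n. \<Sum>j<m. cmod (z l j) powr p)" if "(m,y) \<in> Bset N" for m y z
    unfolding Mo_def by (rule block_ineq(3)[where c=c, OF p X]) (use mu' c1 c0 that in \<open>auto simp: Bset_def\<close>)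
  have MoK: "Mo m y \<le> K" "0 \<le> Mo m y" if "(m,y) \<in> Bset N" for m y
  proof -
    have y: "y \<in> mats m m" "N m y \<le> 1" using that by (auto simp: Bset_def)
    show "Mo m y \<le> K" unfolding Mo_def K_def
      by (rule block_ineq(1)[OF p X]) (use mu' c1 c0 y in auto)
    show "0 \<le> Mo m y" unfolding Mo_def
      by (rule block_ineq(2)[where c=c, OF p X]) (use mu' c1 c0 y in auto)
  qed
  define Sset where "Sset = {Mo m y | m y. y \<in> mats m m \<and> N m y \<le> 1}"
  have dm: "dual_mnorm p N n \<mu> = Sup Sset" unfolding dual_mnorm_def Sset_def Mo_def ..
  have Sbdd: "bdd_above Sset" unfolding Sset_def bdd_above_def using MoK by (auto simp: Bset_def)
  have B0: "(0, (\<lambda>i j. 0)) \<in> Bset N"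
    using pos_zero[OF X, of 0] by (simp add: Bset_def mats_def)
  have Sne: "Sset \<noteq> {}" using B0 unfolding Sset_def Bset_def by auto
  define S where "S = Sup Sset"
  have MoS: "Mo m y \<le> S" if "(m,y) \<in> Bset N" for m y
    unfolding S_def using that Sbdd by (intro cSup_upper) (auto simp: Sset_def Bset_def)
  have S0: "0 \<le> S" using MoS[OF B0] MoK(2)[OF B0] by linarith
  define I where "I = Iset N"
  define Oset where "Oset = {(\<Sum>k<n. lp_norm p I (\<lambda>i. \<Sum>l<n. Phi N (\<mu> k l) (x l) i) powr p) powr (1 / p) | x.
        (\<forall>l<n. x l \<in> lp_space p I) \<and> (\<Sum>l<n. lp_norm p I (x l) powr p) powr (1 / p) \<le> 1}"
  have om: "op_mnorm p (Iset N) n (\<lambda>k l. Phi N (\<mu> k l)) = Sup Oset"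
    unfolding op_mnorm_def Oset_def I_def ..
  have Ieq: "I = {(m,y,i). (m,y) \<in> Bset N \<and> i < m}" by (simp add: I_def Iset_def)
  have Ole: "e \<le> S" if "e \<in> Oset" for e
  proof -
    from that obtain x where e: "e = (\<Sum>k<n. lp_norm p I (\<lambda>i. \<Sum>l<n. Phi N (\<mu> k l) (x l) i) powr p) powr (1/p)"
      and xl: "\<forall>l<n. x l \<in> lp_space p I" and xn: "(\<Sum>l<n. lp_norm p I (x l) powr p) powr (1/p) \<le> 1"
      unfolding Oset_def by blast
    have xs: "\<And>l. l<n \<Longrightarrow> (\<lambda>t. cmod (x l t) powr p) summable_on I" using xl by (simp add: lp_space_def)
    have xn1: "(\<Sum>l<n. lp_norm p I (x l) powr p) \<le> 1"
      using xn powr_le1_iff[OF _ p0, of "\<Sum>l<n. lp_norm p I (x l) powr p"] by (simp add: sum_nonneg)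
    define V where "V = (\<lambda>k i. \<Sum>l<n. Phi N (\<mu> k l) (x l) i)"
    define g where "g k t = cmod (V k t) powr p" for k t
    define H where "H t = S powr p * (\<Sum>l<n. cmod (x l t) powr p)" for t
    have Hs0: "(\<lambda>t. \<Sum>l<n. cmod (x l t) powr p) summable_on I \<and>
        infsum (\<lambda>t. \<Sum>l<n. cmod (x l t) powr p) I = (\<Sum>l<n. infsum (\<lambda>t. cmod (x l t) powr p) I)"
      by (rule summable_fin_sum) (auto simp: xs)
    have Hs: "H summable_on I" unfolding H_def using Hs0 summable_on_cmult_right by blast
    have HI: "infsum H I = S powr p * (\<Sum>l<n. lp_norm p I (x l) powr p)"
      unfolding H_def using Hs0 by (simp add: infsum_cmult_right lp_norm_powr[OF p0])
    have H0: "0 \<le> H t" for t unfolding H_def using S0 by (intro mult_nonneg_nonneg sum_nonneg) auto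
    have g0: "0 \<le> g k t" for k t by (simp add: g_def)
    have blkG: "(\<Sum>i<m. \<Sum>k<n. g k (m,y,i)) \<le> (\<Sum>i<m. H (m,y,i))" if my: "(m,y) \<in> Bset N" for m y
    proof -
      have "(\<Sum>i<m. \<Sum>k<n. g k (m,y,i)) = (\<Sum>k<n. \<Sum>i<m. g k (m,y,i))" by (rule sum.swap)
      also have "\<dots> = (\<Sum>k<n. \<Sum>i<m. cmod (\<Sum>l<n. \<Sum>j<m. \<mu> k l (y i j) * x l (m,y,j)) powr p)"
        using my by (intro sum.cong refl) (simp add: g_def V_def Phi_in)
      also have "\<dots> \<le> Mo m y powr p * (\<Sum>l<n. \<Sum>j<m. cmod (x l (m,y,j)) powr p)" by (rule bi3[OF my])
      also have "\<dots> \<le> S powr p * (\<Sum>l<n. \<Sum>j<m. cmod (x l (m,y,j)) powr p)"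
        by (intro mult_right_mono powr_mono2 sum_nonneg) (use MoS[OF my] MoK(2)[OF my] p0 in auto)
      also have "(\<Sum>l<n. \<Sum>j<m. cmod (x l (m,y,j)) powr p) = (\<Sum>j<m. \<Sum>l<n. cmod (x l (m,y,j)) powr p)"
        by (rule sum.swap)
      also have "S powr p * \<dots> = (\<Sum>i<m. H (m,y,i))" by (simp add: H_def sum_distrib_left)
      finally show ?thesis .
    qed
    have gs: "g k summable_on I" if k: "k < n" for k
    proof -
      have "g k summable_on I \<and> infsum (g k) I \<le> infsum H I"
      proof (rule block_sum[OF Ieq])
        fix m y assume my: "(m,y) \<in> Bset N"
        have "(\<Sum>i<m. g k (m,y,i)) \<le> (\<Sum>i<m. \<Sum>k<n. g k (m,y,i))"
          using k g0 by (intro sum_mono member_le_sum) auto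
        also have "\<dots> \<le> (\<Sum>i<m. H (m,y,i))" by (rule blkG[OF my])
        finally show "(\<Sum>i<m. g k (m,y,i)) \<le> (\<Sum>i<m. H (m,y,i))" .
      qed (use g0 H0 Hs in auto)
      then show ?thesis by blast
    qed
    have Gs: "(\<lambda>t. \<Sum>k<n. g k t) summable_on I \<and> infsum (\<lambda>t. \<Sum>k<n. g k t) I = (\<Sum>k<n. infsum (g k) I)"
      by (rule summable_fin_sum) (auto simp: gs)
    have GH: "(\<lambda>t. \<Sum>k<n. g k t) summable_on I \<and> infsum (\<lambda>t. \<Sum>k<n. g k t) I \<le> infsum H I"
      by (rule block_sum[OF Ieq]) (use g0 H0 Hs blkG in \<open>auto intro: sum_nonneg\<close>)
    have "(\<Sum>k<n. lp_norm p I (V k) powr p) = (\<Sum>k<n. infsum (g k) I)"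
      by (simp add: lp_norm_powr[OF p0] g_def[abs_def])
    also have "\<dots> \<le> infsum H I" using Gs GH by simp
    also have "\<dots> \<le> S powr p * 1" unfolding HI
      by (rule mult_left_mono[OF xn1]) simp
    finally have le: "(\<Sum>k<n. lp_norm p I (V k) powr p) \<le> S powr p" by simp
    have "e = (\<Sum>k<n. lp_norm p I (V k) powr p) powr (1/p)" unfolding e V_def ..
    also have "\<dots> \<le> (S powr p) powr (1/p)"
      by (rule powr_mono2[OF _ _ le]) (use p0 in \<open>auto intro: sum_nonneg\<close>)
    also have "\<dots> = S" using S0 p0 by (simp add: powr_powr)
    finally show ?thesis .
  qed
  have Oin: "pnorm p ({..<n}\<times>{..<m}) (\<lambda>r. \<Sum>s\<in>{..<n}\<times>{..<m}. (\<lambda>(k,i) (l,j). \<mu> k l (y i j)) r s * Z s) \<in> Oset"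
    if my: "(m,y) \<in> Bset N" and hZ: "pnorm p ({..<n}\<times>{..<m}) Z \<le> 1" for m y Z
  proof -
    define x where "x = (\<lambda>l (m',y',j). if m' = m \<and> y' = y \<and> j < m then Z (l,j) else (0::complex))"
    define Blk where "Blk = (\<lambda>j. (m,y,j)) ` {..<m}"
    have BlkI: "Blk \<subseteq> I" using my by (auto simp: Blk_def I_def Iset_def)
    have finBlk: "finite Blk" by (simp add: Blk_def)
    have injB: "inj_on (\<lambda>j. (m,y,j)) {..<m}" by (auto simp: inj_on_def)
    have xout: "x l t = 0" if "t \<notin> Blk" for l t
      using that by (cases t) (auto simp: x_def Blk_def)
    have sumBlk: "sum f Blk = (\<Sum>j<m. f (m,y,j))" for f :: "'a idx \<Rightarrow> real"
      unfolding Blk_def by (simp add: sum.reindex[OF injB])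
    have xinf: "(\<lambda>t. cmod (x l t) powr p) summable_on I \<and>
        infsum (\<lambda>t. cmod (x l t) powr p) I = (\<Sum>j<m. cmod (Z (l,j)) powr p)" for l
    proof -
      have "(\<lambda>t. cmod (x l t) powr p) summable_on I \<and>
          infsum (\<lambda>t. cmod (x l t) powr p) I = sum (\<lambda>t. cmod (x l t) powr p) Blk"
        by (rule finite_support_infsum[OF finBlk BlkI]) (simp add: xout)
      moreover have "sum (\<lambda>t. cmod (x l t) powr p) Blk = (\<Sum>j<m. cmod (Z (l,j)) powr p)"
        unfolding sumBlk by (intro sum.cong refl) (simp add: x_def)
      ultimately show ?thesis by simp
    qed
    have xlp: "x l \<in> lp_space p I" for l
    proof -
      have "\<forall>t. t \<notin> I \<longrightarrow> x l t = 0" using xout BlkI by blast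
      then show ?thesis unfolding lp_space_def using xinf[of l] by blast
    qed
    have xnorm: "(\<Sum>l<n. lp_norm p I (x l) powr p) = (\<Sum>r\<in>{..<n}\<times>{..<m}. cmod (Z r) powr p)"
      by (simp add: lp_norm_powr[OF p0] xinf sum_prod_split)
    have xn: "(\<Sum>l<n. lp_norm p I (x l) powr p) powr (1/p) \<le> 1"
    proof -
      have "(\<Sum>r\<in>{..<n}\<times>{..<m}. cmod (Z r) powr p) \<le> 1" using hZ pnorm_le1_iff[OF p0] by blast
      then have "(\<Sum>l<n. lp_norm p I (x l) powr p) \<le> 1" using xnorm by simp
      then show ?thesis using powr_le1_iff[OF _ p0, of "\<Sum>l<n. lp_norm p I (x l) powr p"] by (simp add: sum_nonneg)
    qed
    define V where "V = (\<lambda>k i. \<Sum>l<n. Phi N (\<mu> k l) (x l) i)"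
    have Vin: "V k (m,y,i) = (\<Sum>l<n. \<Sum>j<m. \<mu> k l (y i j) * Z (l,j))" if "i < m" for k i
      unfolding V_def using my that by (intro sum.cong refl) (simp add: Phi_in x_def)
    have Vout: "V k t = 0" if "t \<in> I - Blk" for k t
    proof -
      obtain m' y' i where t: "t = (m',y',i)" by (cases t) auto
      have m'y': "(m',y') \<in> Bset N" "i < m'" using that t by (auto simp: I_def Iset_def)
      have ne: "\<not> (m' = m \<and> y' = y)" using that t m'y'(2) by (auto simp: Blk_def)
      have ne': "\<not> (m' = m \<and> y' = y \<and> j < m)" for j using ne by blast
      show ?thesis unfolding V_def t using m'y' by (simp add: Phi_in x_def ne')
    qed
    have ginf: "infsum (\<lambda>t. cmod (V k t) powr p) I = (\<Sum>i<m. cmod (\<Sum>l<n. \<Sum>j<m. \<mu> k l (y i j) * Z (l,j)) powr p)" for k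
    proof -
      have "(\<lambda>t. cmod (V k t) powr p) summable_on I \<and>
          infsum (\<lambda>t. cmod (V k t) powr p) I = sum (\<lambda>t. cmod (V k t) powr p) Blk"
        by (rule finite_support_infsum[OF finBlk BlkI]) (simp add: Vout p0)
      then show ?thesis unfolding sumBlk by (simp add: Vin)
    qed
    define MZ where "MZ = pnorm p ({..<n}\<times>{..<m}) (\<lambda>r. \<Sum>s\<in>{..<n}\<times>{..<m}. (\<lambda>(k,i) (l,j). \<mu> k l (y i j)) r s * Z s)"
    have "MZ powr p = (\<Sum>k<n. \<Sum>i<m. cmod (\<Sum>l<n. \<Sum>j<m. \<mu> k l (y i j) * Z (l,j)) powr p)"
      unfolding MZ_def by (simp add: pnorm_powr[OF p0] sum_prod_split)
    also have "\<dots> = (\<Sum>k<n. lp_norm p I (V k) powr p)"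
      by (simp add: lp_norm_powr[OF p0] ginf)
    finally have MZp: "MZ powr p = (\<Sum>k<n. lp_norm p I (V k) powr p)" .
    have "0 \<le> MZ" unfolding MZ_def by (rule pnorm_nonneg)
    then have "MZ = (MZ powr p) powr (1/p)" using p0 by (simp add: powr_powr)
    then have "MZ = (\<Sum>k<n. lp_norm p I (V k) powr p) powr (1/p)" by (simp only: MZp)
    then have "MZ = (\<Sum>k<n. lp_norm p I (\<lambda>i. \<Sum>l<n. Phi N (\<mu> k l) (x l) i) powr p) powr (1 / p)"
      unfolding V_def .
    then show ?thesis unfolding Oset_def MZ_def using xlp xn by blast
  qed
  have One: "Oset \<noteq> {}"
    using Oin[OF B0, of "\<lambda>_. 0"] by auto
  have Obdd: "bdd_above Oset" using Ole unfolding bdd_above_def by blast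
  have le1: "Sup Oset \<le> S" using One Ole by (intro cSup_least) auto
  have le2: "S \<le> Sup Oset" unfolding S_def
  proof (rule cSup_least[OF Sne])
    fix e assume "e \<in> Sset"
    then obtain m y where e: "e = Mo m y" and my: "(m,y) \<in> Bset N" unfolding Sset_def Bset_def by auto
    show "e \<le> Sup Oset" unfolding e Mo_def
    proof (rule opn_le)
      fix Z assume "pnorm p ({..<n}\<times>{..<m}) Z \<le> 1"
      then show "pnorm p ({..<n}\<times>{..<m}) (\<lambda>r. \<Sum>s\<in>{..<n}\<times>{..<m}. (\<lambda>(k,i) (l,j). \<mu> k l (y i j)) r s * Z s) \<le> Sup Oset"
        using Oin[OF my] Obdd by (intro cSup_upper) auto
    qed
  qed
  show ?thesis using om dm le1 le2 unfolding S_def by linarith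
qed


theorem theorem4p2:
  fixes p :: real and smul :: "complex \<Rightarrow> 'a::banach \<Rightarrow> 'a"
    and N :: "nat \<Rightarrow> (nat \<Rightarrow> nat \<Rightarrow> 'a) \<Rightarrow> real"
  assumes "1 < p" and "p_operator_space p smul N"
  shows "\<exists>(I :: 'a idx set) (\<Phi> :: ('a \<Rightarrow> complex) \<Rightarrow> ('a idx \<Rightarrow> complex) \<Rightarrow> ('a idx \<Rightarrow> complex)).
           (\<forall>\<mu>\<in>dual_space smul. bounded_op p I (\<Phi> \<mu>)) \<and>
           (\<forall>\<mu>\<in>dual_space smul. \<forall>\<nu>\<in>dual_space smul. \<forall>a b. \<forall>x\<in>lp_space p I.
              \<Phi> (\<lambda>y. a * \<mu> y + b * \<nu> y) x = (\<lambda>i. a * \<Phi> \<mu> x i + b * \<Phi> \<nu> x i)) \<and>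
           (\<forall>n \<mu>. (\<forall>k<n. \<forall>l<n. \<mu> k l \<in> dual_space smul) \<longrightarrow>
              op_mnorm p I n (\<lambda>k l. \<Phi> (\<mu> k l)) = dual_mnorm p N n \<mu>)"
proof (intro exI[of _ "Iset N"] exI[of _ "Phi N"] conjI ballI allI impI)
  fix \<mu> assume "\<mu> \<in> dual_space smul"
  then show "bounded_op p (Iset N) (Phi N \<mu>)" by (rule Phi_bounded[OF assms])
next
  fix \<mu> \<nu> a b x
  show "Phi N (\<lambda>y. a * \<mu> y + b * \<nu> y) x = (\<lambda>i. a * Phi N \<mu> x i + b * Phi N \<nu> x i)"
    by (rule Phi_lin)
next
  fix n and \<mu> :: "nat \<Rightarrow> nat \<Rightarrow> 'a \<Rightarrow> complex"
  assume "\<forall>k<n. \<forall>l<n. \<mu> k l \<in> dual_space smul"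
  then show "op_mnorm p (Iset N) n (\<lambda>k l. Phi N (\<mu> k l)) = dual_mnorm p N n \<mu>"
    by (rule Phi_norm[OF assms])
qed

end
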